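(* Let $T$ be a pre-truss and let $P$ be a paragon in $T$. Then $P$ is a completely prime paragon if and only if the quotient pre-truss $T/P$ is a domain.
   Context: A heap is a set with a ternary operation $[-,-,-]$ satisfying $[a_1,a_2,[a_3,a_4,a_5]]=[[a_1,a_2,a_3],a_4,a_5]$ and $[a,a,b]=b=[b,a,a]$. A normal sub-heap of $H$ is a non-empty subset $S$ closed under $[-,-,-]$ with $[[a,e,s],a,e]\in S$ for all $a\in H$, $e,s\in S$; $a\sim_S b$ iff $[a,b,s]\in S$ for some (equivalently all) $s\in S$. A pre-truss is a heap with an associative binary operation (juxtaposition). A sub-heap $S$ is closed if $[ts',ts,s]\in S$ and $[s't,st,s]\in S$ for all $s,s'\in S$, $t\in T$. A paragon is a non-empty normal sub-heap $P$ all of whose $\sim_P$-classes are closed sub-heaps; $T/P$ is then a pre-truss with $\bar a\bar b=\overline{ab}$. An ideal is a normal sub-heap $I$ with $ti\in I$ and $it\in I$ for all $t\in T$, $i\in I$. An element $a$ is an absorber if $ta=a=at$ for all $t$; it is unique if it exists, and $T^{\mathrm{Abs}}$ denotes $T$ minus its absorber (or $T$ itself if there is none). An element $a\in T^{\mathrm{Abs}}$ is regular if for all $b\neq c$ in $T$, $ab\neq ac$ and $ba\neq ca$. A pre-truss is a domain if all elements of $T^{\mathrm{Abs}}$ are regular. For $p\in P$, $a\in T$ write $P_p^a=\{[q,p,a]\mid q\in P\}$. A non-empty paragon $P$ is completely prime if for all $p\in P$ and $a,b,c\in T$: $[ab,ac,p]\in P$ implies that $P_p^a$ is an ideal or $[b,c,p]\in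 P$; and $[ba,ca,p]\in P$ implies that $P_p^a$ is an ideal or $[b,c,p]\in P$. *)

theory Defs
  imports Main
begin

text \<open>A pre-truss is modelled on a type 'a: the heap operation is a ternary
function h (h a b c = [a,b,c]) and juxtaposition is a binary function m.\<close>

definition heap :: "('a \<Rightarrow> 'a \<Rightarrow> 'a \<Rightarrow> 'a) \<Rightarrow> bool" where
  "heap h \<longleftrightarrow>
     (\<forall>a1 a2 a3 a4 a5. h a1 a2 (h a3 a4 a5) = h (h a1 a2 a3) a4 a5) \<and>
     (\<forall>a b. h a a b = b \<and> h b a a = b)"

definition pretruss :: "('a \<Rightarrow> 'a \<Rightarrow> 'a \<Rightarrow> 'a) \<Rightarrow> ('a \<Rightarrow> 'a \<Rightarrow> 'a) \<Rightarrow> bool" where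
  "pretruss h m \<longleftrightarrow> heap h \<and> (\<forall>a b c. m (m a b) c = m a (m b c))"

definition subheap_closed :: "('a \<Rightarrow> 'a \<Rightarrow> 'a \<Rightarrow> 'a) \<Rightarrow> 'a set \<Rightarrow> bool" where
  "subheap_closed h S \<longleftrightarrow> (\<forall>a\<in>S. \<forall>b\<in>S. \<forall>c\<in>S. h a b c \<in> S)"

definition normal_subheap :: "('a \<Rightarrow> 'a \<Rightarrow> 'a \<Rightarrow> 'a) \<Rightarrow> 'a set \<Rightarrow> bool" where
  "normal_subheap h S \<longleftrightarrow> S \<noteq> {} \<and> subheap_closed h S \<and>
     (\<forall>a. \<forall>e\<in>S. \<forall>s\<in>S. h (h a e s) a e \<in> S)"

definition heap_sim :: "('a \<Rightarrow> 'a \<Rightarrow> 'a \<Rightarrow> 'a) \<Rightarrow> 'a set \<Rightarrow> 'a \<Rightarrow> 'a \<Rightarrow> bool" where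
  "heap_sim h S a b \<longleftrightarrow> (\<exists>s\<in>S. h a b s \<in> S)"

definition cls :: "('a \<Rightarrow> 'a \<Rightarrow> 'a \<Rightarrow> 'a) \<Rightarrow> 'a set \<Rightarrow> 'a \<Rightarrow> 'a set" where
  "cls h S a = {b. heap_sim h S a b}"

definition closed_subheap :: "('a \<Rightarrow> 'a \<Rightarrow> 'a \<Rightarrow> 'a) \<Rightarrow> ('a \<Rightarrow> 'a \<Rightarrow> 'a) \<Rightarrow> 'a set \<Rightarrow> bool" where
  "closed_subheap h m S \<longleftrightarrow> S \<noteq> {} \<and> subheap_closed h S \<and>
     (\<forall>s\<in>S. \<forall>s'\<in>S. \<forall>t. h (m t s') (m t s) s \<in> S \<and> h (m s' t) (m s t) s \<in> S)"

definition paragon :: "('a \<Rightarrow> 'a \<Rightarrow> 'a \<Rightarrow> 'a) \<Rightarrow> ('a \<Rightarrow> 'a \<Rightarrow> 'a) \<Rightarrow> 'a set \<Rightarrow> bool" where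
  "paragon h m P \<longleftrightarrow> P \<noteq> {} \<and> normal_subheap h P \<and> (\<forall>a. closed_subheap h m (cls h P a))"

definition ideal :: "('a \<Rightarrow> 'a \<Rightarrow> 'a \<Rightarrow> 'a) \<Rightarrow> ('a \<Rightarrow> 'a \<Rightarrow> 'a) \<Rightarrow> 'a set \<Rightarrow> bool" where
  "ideal h m I \<longleftrightarrow> normal_subheap h I \<and> (\<forall>t. \<forall>i\<in>I. m t i \<in> I \<and> m i t \<in> I)"

definition Ppa :: "('a \<Rightarrow> 'a \<Rightarrow> 'a \<Rightarrow> 'a) \<Rightarrow> 'a set \<Rightarrow> 'a \<Rightarrow> 'a \<Rightarrow> 'a set" where
  "Ppa h P p a = {h q p a | q. q \<in> P}"

definition completely_prime :: "('a \<Rightarrow> 'a \<Rightarrow> 'a \<Rightarrow> 'a) \<Rightarrow> ('a \<Rightarrow> 'a \<Rightarrow> 'a) \<Rightarrow> 'a set \<Rightarrow> bool" where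
  "completely_prime h m P \<longleftrightarrow> P \<noteq> {} \<and> paragon h m P \<and>
     (\<forall>p\<in>P. \<forall>a b c.
        (h (m a b) (m a c) p \<in> P \<longrightarrow> ideal h m (Ppa h P p a) \<or> h b c p \<in> P) \<and>
        (h (m b a) (m c a) p \<in> P \<longrightarrow> ideal h m (Ppa h P p a) \<or> h b c p \<in> P))"

definition quot :: "('a \<Rightarrow> 'a \<Rightarrow> 'a \<Rightarrow> 'a) \<Rightarrow> 'a set \<Rightarrow> 'a set set" where
  "quot h P = range (cls h P)"

definition qmult :: "('a \<Rightarrow> 'a \<Rightarrow> 'a \<Rightarrow> 'a) \<Rightarrow> ('a \<Rightarrow> 'a \<Rightarrow> 'a) \<Rightarrow> 'a set
                      \<Rightarrow> 'a set \<Rightarrow> 'a set \<Rightarrow> 'a set" where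
  "qmult h m P X Y = cls h P (m (SOME a. a \<in> X) (SOME b. b \<in> Y))"

definition absorber :: "'b set \<Rightarrow> ('b \<Rightarrow> 'b \<Rightarrow> 'b) \<Rightarrow> 'b \<Rightarrow> bool" where
  "absorber C mult z \<longleftrightarrow> z \<in> C \<and> (\<forall>t\<in>C. mult t z = z \<and> mult z t = z)"

definition abs_removed :: "'b set \<Rightarrow> ('b \<Rightarrow> 'b \<Rightarrow> 'b) \<Rightarrow> 'b set" where
  "abs_removed C mult = {a \<in> C. \<not> absorber C mult a}"

definition regular :: "'b set \<Rightarrow> ('b \<Rightarrow> 'b \<Rightarrow> 'b) \<Rightarrow> 'b \<Rightarrow> bool" where
  "regular C mult a \<longleftrightarrow> a \<in> abs_removed C mult \<and>
     (\<forall>b\<in>C. \<forall>c\<in>C. b \<noteq> c \<longrightarrow> mult a b \<noteq> mult a c \<and> mult b a \<noteq> mult c a)"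

definition is_domain :: "'b set \<Rightarrow> ('b \<Rightarrow> 'b \<Rightarrow> 'b) \<Rightarrow> bool" where
  "is_domain C mult \<longleftrightarrow> (\<forall>a\<in>abs_removed C mult. regular C mult a)"

end

theory Submission
  imports Defs
begin

lemma heap_rules:
  assumes "heap h"
  shows "h (h a b c) d e = h a b (h c d e)"
    and "h a a x = x" and "h x a a = x"
    and "h a b (h b c d) = h a c d"
    and "h a (h b c d) e = h a d (h c b e)"
proof -
  have A: "\<And>a1 a2 a3 a4 a5. h a1 a2 (h a3 a4 a5) = h (h a1 a2 a3) a4 a5"
    and B: "\<And>a b. h a a b = b" and C: "\<And>a b. h b a a = b"
    using assms unfolding heap_def by auto
  show 1: "h (h a b c) d e = h a b (h c d e)" using A by simp
  show "h a a x = x" using B by simp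
  show "h x a a = x" using C by simp
  show 4: "\<And>a b c d. h a b (h b c d) = h a c d" using A C by simp
  have "h c b e = h d (h b c d) e"
  proof -
    have "h c b e = h c b (h (h b c d) (h b c d) e)" using B by simp
    also have "... = h (h c b (h b c d)) (h b c d) e" using A by simp
    also have "... = h d (h b c d) e" using 4[of c b c d] B by simp
    finally show ?thesis .
  qed
  then show "h a (h b c d) e = h a d (h c b e)" using A C by simp
qed

locale ctx =
  fixes h :: "'a \<Rightarrow> 'a \<Rightarrow> 'a \<Rightarrow> 'a" and m :: "'a \<Rightarrow> 'a \<Rightarrow> 'a" and P :: "'a set"
  assumes hp: "heap h" and par: "paragon h m P"
begin

lemmas H = heap_rules[OF hp]

lemma clP: "a \<in> P \<Longrightarrow> b \<in> P \<Longrightarrow> c \<in> P \<Longrightarrow> h a b c \<in> P"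
  using par unfolding paragon_def normal_subheap_def subheap_closed_def by blast

lemma normP: "e \<in> P \<Longrightarrow> s \<in> P \<Longrightarrow> h (h x e s) x e \<in> P"
  using par unfolding paragon_def normal_subheap_def by blast

lemma Pne: "\<exists>p. p \<in> P" using par unfolding paragon_def by blast

lemma sim_iff: "p \<in> P \<Longrightarrow> heap_sim h P a b \<longleftrightarrow> h a b p \<in> P"
proof
  assume p: "p \<in> P" and "heap_sim h P a b"
  then obtain s where s: "s \<in> P" "h a b s \<in> P" unfolding heap_sim_def by blast
  have "h (h a b s) s p \<in> P" using clP s p by blast
  then show "h a b p \<in> P" by (simp add: H)
qed (auto simp: heap_sim_def)

lemma sim_refl: "heap_sim h P a a"
  using Pne by (auto simp: heap_sim_def H)

lemma sim_sym: "heap_sim h P a b \<Longrightarrow> heap_sim h P b a"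
proof -
  assume "heap_sim h P a b"
  then obtain s where s: "s \<in> P" "h a b s \<in> P" unfolding heap_sim_def by blast
  have "h s (h a b s) s \<in> P" using clP s by blast
  then have "h b a s \<in> P" by (simp add: H)
  then show ?thesis using s unfolding heap_sim_def by blast
qed

lemma sim_trans: "heap_sim h P a b \<Longrightarrow> heap_sim h P b c \<Longrightarrow> heap_sim h P a c"
proof -
  assume 1: "heap_sim h P a b" and 2: "heap_sim h P b c"
  obtain p where p: "p \<in> P" using Pne by blast
  have "h (h a b p) p (h b c p) \<in> P" using clP p 1 2 sim_iff by blast
  then have "h a c p \<in> P" by (simp add: H)
  then show ?thesis using p sim_iff by blast
qed

lemma mem_cls: "b \<in> cls h P a \<longleftrightarrow> heap_sim h P a b"
  by (simp add: cls_def)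

lemma cls_eq: "cls h P a = cls h P b \<longleftrightarrow> heap_sim h P a b"
proof
  assume "cls h P a = cls h P b"
  then have "b \<in> cls h P a" using sim_refl mem_cls by blast
  then show "heap_sim h P a b" by (simp add: mem_cls)
next
  assume "heap_sim h P a b"
  then show "cls h P a = cls h P b"
    unfolding cls_def using sim_sym sim_trans by blast
qed

lemma cls_closed: "closed_subheap h m (cls h P a)"
  using par unfolding paragon_def by blast

lemma cong_right: "heap_sim h P a a' \<Longrightarrow> heap_sim h P (m a t) (m a' t)"
proof -
  assume aa: "heap_sim h P a a'"
  obtain p where p: "p \<in> P" using Pne by blast
  have "a' \<in> cls h P a'" "a \<in> cls h P a'" using sim_refl sim_sym aa mem_cls by blast+
  then have "h (m a t) (m a' t) a' \<in> cls h P a'"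
    using cls_closed[of a'] unfolding closed_subheap_def by blast
  then have "h a' (h (m a t) (m a' t) a') p \<in> P" using mem_cls sim_iff p by blast
  then have "h (m a' t) (m a t) p \<in> P" by (simp add: H)
  then show ?thesis using sim_iff p sim_sym by blast
qed

lemma cong_left: "heap_sim h P a a' \<Longrightarrow> heap_sim h P (m t a) (m t a')"
proof -
  assume aa: "heap_sim h P a a'"
  obtain p where p: "p \<in> P" using Pne by blast
  have "a' \<in> cls h P a'" "a \<in> cls h P a'" using sim_refl sim_sym aa mem_cls by blast+
  then have "h (m t a) (m t a') a' \<in> cls h P a'"
    using cls_closed[of a'] unfolding closed_subheap_def by blast
  then have "h a' (h (m t a) (m t a') a') p \<in> P" using mem_cls sim_iff p by blast
  then have "h (m t a') (m t a) p \<in> P" by (simp add: H)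
  then show ?thesis using sim_iff p sim_sym by blast
qed

lemma qmult_cls: "qmult h m P (cls h P a) (cls h P b) = cls h P (m a b)"
proof -
  define x where "x = (SOME x. x \<in> cls h P a)"
  define y where "y = (SOME y. y \<in> cls h P b)"
  have "x \<in> cls h P a" unfolding x_def by (rule someI[of _ a]) (simp add: mem_cls sim_refl)
  then have x: "heap_sim h P a x" by (simp add: mem_cls)
  have "y \<in> cls h P b" unfolding y_def by (rule someI[of _ b]) (simp add: mem_cls sim_refl)
  then have y: "heap_sim h P b y" by (simp add: mem_cls)
  have "heap_sim h P (m a b) (m x y)"
    using sim_trans cong_right[OF x] cong_left[OF y] by blast
  then show ?thesis unfolding qmult_def x_def[symmetric] y_def[symmetric]
    using cls_eq by blast
qed

lemma Ppa_eq: "p \<in> P \<Longrightarrow> Ppa h P p a = cls h P a"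
proof (rule set_eqI)
  fix b assume p: "p \<in> P"
  show "b \<in> Ppa h P p a \<longleftrightarrow> b \<in> cls h P a"
  proof
    assume "b \<in> Ppa h P p a"
    then obtain q where q: "q \<in> P" "b = h q p a" unfolding Ppa_def by blast
    have "h p q p \<in> P" using clP q p by blast
    then have "h a b p \<in> P" using q by (simp add: H)
    then show "b \<in> cls h P a" using mem_cls sim_iff p by blast
  next
    assume "b \<in> cls h P a"
    then have "h b a p \<in> P" using mem_cls sim_iff p sim_sym by blast
    moreover have "b = h (h b a p) p a" by (simp add: H)
    ultimately show "b \<in> Ppa h P p a" unfolding Ppa_def by blast
  qed
qed

lemma absorber_iff: "absorber (quot h P) (qmult h m P) (cls h P a) \<longleftrightarrow> ideal h m (cls h P a)"
proof
  assume ab: "absorber (quot h P) (qmult h m P) (cls h P a)"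
  have abs1: "heap_sim h P a (m t a) \<and> heap_sim h P a (m a t)" for t
  proof -
    have "cls h P t \<in> quot h P" by (simp add: quot_def)
    then have "qmult h m P (cls h P t) (cls h P a) = cls h P a"
      "qmult h m P (cls h P a) (cls h P t) = cls h P a"
      using ab unfolding absorber_def by auto
    then show ?thesis using qmult_cls cls_eq sim_sym by metis
  qed
  have ns: "normal_subheap h (cls h P a)"
    unfolding normal_subheap_def
  proof (intro conjI ballI allI)
    show "cls h P a \<noteq> {}" using sim_refl mem_cls by blast
    show "subheap_closed h (cls h P a)" using cls_closed unfolding closed_subheap_def by blast
  next
    fix x e s assume e: "e \<in> cls h P a" and s: "s \<in> cls h P a"
    obtain p where p: "p \<in> P" using Pne by blast
    have es: "heap_sim h P e s" using e s mem_cls sim_sym sim_trans by blast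
    have u: "h e s p \<in> P" using es sim_iff p by blast
    have y: "h x s p \<in> P \<or> True" by simp
    have "h (h (h x s p) p (h e s p)) (h x s p) p \<in> P" using normP[OF p u] by blast
    then have "h e (h (h x e s) x e) p \<in> P" by (simp add: H)
    then have "heap_sim h P e (h (h x e s) x e)" using sim_iff p by blast
    then show "h (h x e s) x e \<in> cls h P a" using e mem_cls sim_trans by blast
  qed
  show "ideal h m (cls h P a)"
    unfolding ideal_def
  proof (intro conjI ns allI ballI)
    fix t i assume i: "i \<in> cls h P a"
    then have ai: "heap_sim h P a i" by (simp add: mem_cls)
    have "heap_sim h P (m t a) (m t i)" "heap_sim h P (m a t) (m i t)"
      using cong_left[OF ai] cong_right[OF ai] by auto
    then show "m t i \<in> cls h P a" "m i t \<in> cls h P a"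
      using abs1[of t] sim_trans mem_cls by blast+
  qed
next
  assume id: "ideal h m (cls h P a)"
  have a: "a \<in> cls h P a" by (simp add: mem_cls sim_refl)
  show "absorber (quot h P) (qmult h m P) (cls h P a)"
    unfolding absorber_def
  proof (intro conjI ballI)
    show "cls h P a \<in> quot h P" by (simp add: quot_def)
  next
    fix X assume "X \<in> quot h P"
    then obtain t where X: "X = cls h P t" by (auto simp: quot_def)
    have "m t a \<in> cls h P a" "m a t \<in> cls h P a" using id a unfolding ideal_def by blast+
    then show "qmult h m P X (cls h P a) = cls h P a" "qmult h m P (cls h P a) X = cls h P a"
      using X qmult_cls cls_eq mem_cls sim_sym by metis+
  qed
qed

end

theorem theorem4p10:
  fixes h :: "'a \<Rightarrow> 'a \<Rightarrow> 'a \<Rightarrow> 'a" and m :: "'a \<Rightarrow> 'a \<Rightarrow> 'a" and P :: "'a set"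
  assumes "pretruss h m"
    and "paragon h m P"
  shows "completely_prime h m P \<longleftrightarrow> is_domain (quot h P) (qmult h m P)"
proof -
  interpret ctx h m P using assms by (unfold_locales) (auto simp: pretruss_def)
  obtain p0 where p0: "p0 \<in> P" using Pne by blast
  show ?thesis
  proof
    assume cp: "completely_prime h m P"
    show "is_domain (quot h P) (qmult h m P)"
      unfolding is_domain_def regular_def
    proof (intro ballI conjI impI)
      fix X assume X: "X \<in> abs_removed (quot h P) (qmult h m P)"
      then show "X \<in> abs_removed (quot h P) (qmult h m P)" .
      obtain a where Xa: "X = cls h P a" using X by (auto simp: abs_removed_def quot_def)
      have na: "\<not> ideal h m (Ppa h P p0 a)"
        using X Xa absorber_iff Ppa_eq[OF p0] by (auto simp: abs_removed_def)
      fix Y Z assume "Y \<in> quot h P" "Z \<in> quot h P" and YZ: "Y \<noteq> Z"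
      then obtain b c where Y: "Y = cls h P b" and Z: "Z = cls h P c" by (auto simp: quot_def)
      have nbc: "h b c p0 \<notin> P" using YZ Y Z cls_eq sim_iff[OF p0] by blast
      show "qmult h m P X Y \<noteq> qmult h m P X Z"
      proof
        assume "qmult h m P X Y = qmult h m P X Z"
        then have "h (m a b) (m a c) p0 \<in> P" using Xa Y Z qmult_cls cls_eq sim_iff[OF p0] by metis
        then show False using cp p0 na nbc unfolding completely_prime_def by blast
      qed
      show "qmult h m P Y X \<noteq> qmult h m P Z X"
      proof
        assume "qmult h m P Y X = qmult h m P Z X"
        then have "h (m b a) (m c a) p0 \<in> P" using Xa Y Z qmult_cls cls_eq sim_iff[OF p0] by metis
        then show False using cp p0 na nbc unfolding completely_prime_def by blast
      qed
    qed
  next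
    assume dom: "is_domain (quot h P) (qmult h m P)"
    have key: "ideal h m (Ppa h P p a) \<or> h b c p \<in> P"
      if p: "p \<in> P" and eq: "qmult h m P (cls h P a) (cls h P b) = qmult h m P (cls h P a) (cls h P c)
            \<or> qmult h m P (cls h P b) (cls h P a) = qmult h m P (cls h P c) (cls h P a)" for p a b c
    proof (cases "absorber (quot h P) (qmult h m P) (cls h P a)")
      case True
      then show ?thesis using absorber_iff Ppa_eq[OF p] by simp
    next
      case False
      then have "cls h P a \<in> abs_removed (quot h P) (qmult h m P)"
        unfolding abs_removed_def quot_def by blast
      then have "regular (quot h P) (qmult h m P) (cls h P a)" using dom unfolding is_domain_def by blast
      then have R: "\<forall>Y\<in>quot h P. \<forall>Z\<in>quot h P. Y \<noteq> Z \<longrightarrow>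
          qmult h m P (cls h P a) Y \<noteq> qmult h m P (cls h P a) Z \<and> qmult h m P Y (cls h P a) \<noteq> qmult h m P Z (cls h P a)"
        unfolding regular_def by blast
      have "cls h P b \<in> quot h P" "cls h P c \<in> quot h P" unfolding quot_def by blast+
      then have "cls h P b = cls h P c" using eq R by blast
      then show ?thesis using cls_eq sim_iff[OF p] by blast
    qed
    show "completely_prime h m P"
      unfolding completely_prime_def
    proof (intro conjI ballI allI impI)
      show "P \<noteq> {}" using p0 by blast
      show "paragon h m P" by (rule assms(2))
    next
      fix p a b c assume p: "p \<in> P" and "h (m a b) (m a c) p \<in> P"
      then have "cls h P (m a b) = cls h P (m a c)" using cls_eq sim_iff by blast
      then show "ideal h m (Ppa h P p a) \<or> h b c p \<in> P" using key[OF p] qmult_cls by metis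
    next
      fix p a b c assume p: "p \<in> P" and "h (m b a) (m c a) p \<in> P"
      then have "cls h P (m b a) = cls h P (m c a)" using cls_eq sim_iff by blast
      then show "ideal h m (Ppa h P p a) \<or> h b c p \<in> P" using key[OF p] qmult_cls by metis
    qed
  qed
qed

end
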